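(* Let $g\sim(a,b,\mu)$ be a Bernstein function and $r:=r[g]$. Then \[\big[(t\operatorname{Re}z)\,e^{-t\operatorname{Re}z}\big]\,r(t)\le\operatorname{Re}g(z)\le|g(z)|\le\max(2,t|z|)\,r(t)\] for all $t>0$ and all $z\in\mathbb C$ with $\operatorname{Re}z>0$.
   Context: A Bernstein function $g\sim(a,b,\mu)$ is $g(z)=a+bz+\int_{(0,\infty)}(1-e^{-sz})\mu(\mathrm ds)$ ($\operatorname{Re} z>0$) with $a,b\ge0$, $\mu$ positive Radon on $(0,\infty)$, $\int\frac{s}{1+s}\mu(\mathrm ds)<\infty$. Rate function $r[g](t):=\frac a2+\frac bt+\int_{(0,\infty)}\min(s/t,1)\mu(\mathrm ds)$, $t>0$. *)

theory Defs
  imports "HOL-Analysis.Analysis"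
begin

text \<open>A Bernstein triple (a,b,mu): a,b \<ge> 0 and mu a positive measure on the Borel sets
  of the reals, of which only the restriction to (0,\<infinity>) matters, with
  integral of s/(1+s) over (0,\<infinity>) finite. (This finiteness implies mu is Radon on (0,\<infinity>).)\<close>
definition bernstein_triple :: "real \<Rightarrow> real \<Rightarrow> real measure \<Rightarrow> bool" where
  "bernstein_triple a b \<mu> \<longleftrightarrow> a \<ge> 0 \<and> b \<ge> 0 \<and> sets \<mu> = sets borel \<and>
     set_integrable \<mu> {0<..} (\<lambda>s. s / (1 + s))"

definition bernstein_fun :: "real \<Rightarrow> real \<Rightarrow> real measure \<Rightarrow> complex \<Rightarrow> complex" where
  "bernstein_fun a b \<mu> z =
     complex_of_real a + complex_of_real b * z
     + (LINT s:{0<..}|\<mu>. (1 - exp (- (complex_of_real s * z))))"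

definition rate_fun :: "real \<Rightarrow> real \<Rightarrow> real measure \<Rightarrow> real \<Rightarrow> real" where
  "rate_fun a b \<mu> t = a / 2 + b / t + (LINT s:{0<..}|\<mu>. min (s / t) 1)"

end

theory Submission
  imports Defs
begin

lemma norm_1_exp_le:
  fixes w :: complex assumes "Re w \<ge> 0"
  shows "cmod (1 - exp (- w)) \<le> cmod w"
proof -
  let ?S = "{u::complex. Re u \<ge> 0}"
  have cv: "convex ?S" by (rule convex_halfspace_Re_ge)
  have "cmod ((\<lambda>u. exp (- u)) w - (\<lambda>u. exp (-u)) 0) \<le> 1 * cmod (w - 0)"
  proof (rule field_differentiable_bound[OF cv])
    fix u assume "u \<in> ?S"
    show "((\<lambda>u. exp (- u)) has_field_derivative (- exp (- u))) (at u within ?S)"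
      by (auto intro!: derivative_eq_intros)
    show "cmod (- exp (- u)) \<le> 1" using \<open>u \<in> ?S\<close> by (simp add: norm_exp_eq_Re)
  qed (use assms in auto)
  then show ?thesis by (simp add: norm_minus_commute)
qed

lemma norm_1_exp_le2:
  fixes w :: complex assumes "Re w \<ge> 0"
  shows "cmod (1 - exp (- w)) \<le> 2"
proof -
  have "cmod (1 - exp (- w)) \<le> 1 + cmod (exp (-w))" using norm_triangle_ineq4[of 1 "exp (-w)"] by simp
  also have "cmod (exp (-w)) \<le> 1" using assms by (simp add: norm_exp_eq_Re)
  finally show ?thesis by simp
qed

lemma Re_1_exp_ge:
  fixes w :: complex assumes "Re w \<ge> 0"
  shows "1 - exp (- Re w) \<le> Re (1 - exp (- w))"
proof -
  have "Re (exp (-w)) \<le> cmod (exp (-w))" by (rule complex_Re_le_cmod)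
  then show ?thesis by (simp add: norm_exp_eq_Re)
qed

lemma xexp_le: "(x::real) \<ge> 0 \<Longrightarrow> x * exp (-x) \<le> 1 - exp (-x)"
proof -
  assume "x \<ge> 0"
  have "1 + x \<le> exp x" by (rule exp_ge_add_one_self)
  then have "(1 + x) * exp (-x) \<le> 1" by (simp add: exp_minus field_simps)
  then show ?thesis by (simp add: algebra_simps)
qed

lemma key_lower:
  fixes y x :: real assumes "0 \<le> y" "y \<le> x"
  shows "y * exp (-x) \<le> 1 - exp (-y)"
proof -
  have "y * exp (-x) \<le> y * exp (-y)" using assms by (intro mult_left_mono) auto
  also have "\<dots> \<le> 1 - exp (-y)" using xexp_le assms by auto
  finally show ?thesis .
qed

theorem lemma4p1:
  fixes a b t :: real and \<mu> :: "real measure" and z :: complex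
  assumes "bernstein_triple a b \<mu>"
    and "t > 0" and "Re z > 0"
  shows "(t * Re z) * exp (- (t * Re z)) * rate_fun a b \<mu> t \<le> Re (bernstein_fun a b \<mu> z) \<and>
         Re (bernstein_fun a b \<mu> z) \<le> cmod (bernstein_fun a b \<mu> z) \<and>
         cmod (bernstein_fun a b \<mu> z) \<le> max 2 (t * cmod z) * rate_fun a b \<mu> t"
proof -
  define A :: "real set" where "A = {0<..}"
  define F where "F = (\<lambda>s::real. 1 - exp (- (complex_of_real s * z)))"
  define m where "m = (\<lambda>s::real. min (s / t) 1)"
  define h where "h = (\<lambda>s::real. s / (1 + s))"
  define w where "w = Re z"
  define c where "c = (t * w) * exp (- (t * w))"
  define K where "K = max 2 (t * cmod z)"
  have a0: "a \<ge> 0" and b0: "b \<ge> 0" and sM: "sets \<mu> = sets borel"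
    and hi: "set_integrable \<mu> A h"
    using assms(1) unfolding bernstein_triple_def A_def h_def by auto
  have t0: "t > 0" and w0: "w > 0" using assms w_def by auto
  have c0: "c \<ge> 0" using t0 w0 unfolding c_def by auto
  have c1: "c \<le> 1"
  proof -
    have "c \<le> 1 - exp (- (t*w))" unfolding c_def using xexp_le[of "t*w"] t0 w0 by auto
    then show ?thesis by (smt (verit) exp_gt_zero)
  qed
  have meas: "f \<in> borel_measurable \<mu>" if "f \<in> borel_measurable borel" for f :: "real \<Rightarrow> 'x::topological_space"
    using that measurable_cong_sets[OF sM refl] by blast
  have FA: "set_borel_measurable \<mu> A F"
    unfolding set_borel_measurable_def F_def A_def by (intro meas) measurable
  have mA: "set_borel_measurable \<mu> A m"
    unfolding set_borel_measurable_def m_def A_def by (intro meas) measurable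
  have hpos: "\<And>s. s \<in> A \<Longrightarrow> 0 < h s" unfolding A_def h_def by auto
  have Fb: "cmod (F s) \<le> (4 + 2 * cmod z) * h s" if "s \<in> A" for s
  proof -
    have s0: "s > 0" using that A_def by auto
    have Rew: "Re (complex_of_real s * z) \<ge> 0" using s0 w0 w_def by simp
    have n1: "cmod (F s) \<le> s * cmod z" using norm_1_exp_le[OF Rew] s0
      by (simp add: F_def norm_mult)
    have n2: "cmod (F s) \<le> 2" using norm_1_exp_le2[OF Rew] by (simp add: F_def)
    show ?thesis
    proof (cases "s \<le> 1")
      case True
      have "s * cmod z \<le> 2 * cmod z * h s" unfolding h_def using s0 True
        by (simp add: field_simps) (simp add: mult_left_le_one_le)
      moreover have "0 \<le> 4 * h s" using hpos[OF that] by simp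
      ultimately show ?thesis using n1 by (simp add: algebra_simps)
    next
      case False
      have "2 \<le> 4 * h s" unfolding h_def using False by (simp add: field_simps)
      moreover have "0 \<le> 2 * cmod z * h s" using hpos[OF that] by simp
      ultimately have "2 \<le> 4 * h s + 2 * cmod z * h s" by linarith
      then show ?thesis using n2 by (simp add: distrib_right)
    qed
  qed
  have mb: "norm (m s) \<le> norm ((2 + 2 / t) * h s)" if "s \<in> A" for s
  proof -
    have s0: "s > 0" using that A_def by auto
    have hp: "h s > 0" using hpos[OF that] .
    have "m s \<le> (2 + 2 / t) * h s"
    proof (cases "s \<le> 1")
      case True
      have e: "(2 / t) * h s = (s / t) * (2 / (1 + s))" unfolding h_def by simp
      have "1 \<le> 2 / (1 + s)" using True s0 by (simp add: field_simps)
      then have "s / t * 1 \<le> (s / t) * (2 / (1 + s))" using s0 t0 by (intro mult_left_mono) auto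
      then have "s / t \<le> (2 / t) * h s" using e by simp
      moreover have "0 \<le> 2 * h s" using hp by simp
      moreover have "m s \<le> s / t" unfolding m_def by simp
      ultimately show ?thesis by (simp add: distrib_right)
    next
      case False
      have "1 \<le> 2 * h s" unfolding h_def using False by (simp add: field_simps)
      moreover have "0 \<le> (2 / t) * h s" using hp t0 by simp
      moreover have "m s \<le> 1" unfolding m_def by simp
      ultimately show ?thesis by (simp add: distrib_right)
    qed
    moreover have "m s \<ge> 0" unfolding m_def using s0 t0 by simp
    ultimately show ?thesis using hp t0 by simp
  qed
  have hi2: "set_integrable \<mu> A (\<lambda>s. (4 + 2 * cmod z) * h s)" using hi by simp
  have hi3: "set_integrable \<mu> A (\<lambda>s. (2 + 2 / t) * h s)" using hi by simp
  have Fi: "set_integrable \<mu> A F"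
  proof (rule set_integrable_bound[OF hi2 FA], intro AE_I2 impI)
    fix s assume "s \<in> A"
    then show "norm (F s) \<le> norm ((4 + 2 * cmod z) * h s)"
      using Fb[of s] abs_ge_self[of "(4 + 2 * cmod z) * h s"] by (simp del: abs_ge_self)
  qed
  have mi: "set_integrable \<mu> A m"
    by (rule set_integrable_bound[OF hi3 mA]) (use mb in \<open>auto intro!: AE_I2\<close>)
  have ReI: "Re (LINT s:A|\<mu>. F s) = (LINT s:A|\<mu>. Re (F s))"
  proof -
    have I: "integrable \<mu> (\<lambda>x. indicator A x *\<^sub>R F x)" using Fi unfolding set_integrable_def .
    show ?thesis unfolding set_lebesgue_integral_def using integral_Re[OF I, symmetric] by simp
  qed
  have ReFi: "set_integrable \<mu> A (\<lambda>s. Re (F s))"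
  proof -
    have I: "integrable \<mu> (\<lambda>x. indicator A x *\<^sub>R F x)" using Fi unfolding set_integrable_def .
    have "integrable \<mu> (\<lambda>x. Re (indicator A x *\<^sub>R F x))" by (rule integrable_Re[OF I])
    then show ?thesis unfolding set_integrable_def by simp
  qed
  have nFi: "set_integrable \<mu> A (\<lambda>s. cmod (F s))"
  proof -
    have I: "integrable \<mu> (\<lambda>x. indicator A x *\<^sub>R F x)" using Fi unfolding set_integrable_def .
    have "integrable \<mu> (\<lambda>x. norm (indicator A x *\<^sub>R F x))" by (rule integrable_norm[OF I])
    then show ?thesis unfolding set_integrable_def by simp
  qed
  have g_eq: "bernstein_fun a b \<mu> z = complex_of_real a + complex_of_real b * z + (LINT s:A|\<mu>. F s)"
    unfolding bernstein_fun_def A_def F_def ..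
  have r_eq: "rate_fun a b \<mu> t = a / 2 + b / t + (LINT s:A|\<mu>. m s)"
    unfolding rate_fun_def A_def m_def ..
  have lowI: "c * (LINT s:A|\<mu>. m s) \<le> (LINT s:A|\<mu>. Re (F s))"
  proof -
    have "c * (LINT s:A|\<mu>. m s) = (LINT s:A|\<mu>. c * m s)" by simp
    also have "\<dots> \<le> (LINT s:A|\<mu>. Re (F s))"
    proof (rule set_integral_mono)
      show "set_integrable \<mu> A (\<lambda>s. c * m s)" using mi by simp
      show "set_integrable \<mu> A (\<lambda>s. Re (F s))" by (rule ReFi)
      fix s assume "s \<in> A"
      then have s0: "s > 0" using A_def by auto
      have Rew: "Re (complex_of_real s * z) \<ge> 0" using s0 w0 w_def by simp
      have R: "1 - exp (- (s * w)) \<le> Re (F s)"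
        using Re_1_exp_ge[OF Rew] by (simp add: F_def w_def)
      show "c * m s \<le> Re (F s)"
      proof (cases "s \<le> t")
        case True
        have "c * m s = (s * w) * exp (- (t * w))" unfolding c_def m_def using True t0 by simp
        also have "\<dots> \<le> 1 - exp (- (s * w))"
          by (rule key_lower) (use s0 w0 True t0 in \<open>auto intro: mult_right_mono\<close>)
        finally show ?thesis using R by simp
      next
        case False
        have "c * m s = c" unfolding m_def using False t0 by simp
        also have "\<dots> \<le> 1 - exp (- (t * w))" unfolding c_def using xexp_le[of "t*w"] t0 w0 by simp
        also have "\<dots> \<le> 1 - exp (- (s * w))" using False w0 by (simp add: mult_right_mono)
        finally show ?thesis using R by simp
      qed
    qed
    finally show ?thesis .
  qed
  have upI: "cmod (LINT s:A|\<mu>. F s) \<le> K * (LINT s:A|\<mu>. m s)"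
  proof -
    have "cmod (LINT s:A|\<mu>. F s) \<le> (LINT s:A|\<mu>. cmod (F s))" by (rule set_integral_norm_bound[OF Fi])
    also have "\<dots> \<le> (LINT s:A|\<mu>. K * m s)"
    proof (rule set_integral_mono)
      show "set_integrable \<mu> A (\<lambda>s. K * m s)" using mi by simp
      show "set_integrable \<mu> A (\<lambda>s. cmod (F s))" by (rule nFi)
      fix s assume "s \<in> A"
      then have s0: "s > 0" using A_def by auto
      have Rew: "Re (complex_of_real s * z) \<ge> 0" using s0 w0 w_def by simp
      have n1: "cmod (F s) \<le> s * cmod z" using norm_1_exp_le[OF Rew] s0
        by (simp add: F_def norm_mult)
      have n2: "cmod (F s) \<le> 2" using norm_1_exp_le2[OF Rew] by (simp add: F_def)
      show "cmod (F s) \<le> K * m s"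
      proof (cases "s \<le> t")
        case True
        have "s * cmod z = (t * cmod z) * (s / t)" using t0 by simp
        also have "\<dots> \<le> K * (s / t)" unfolding K_def using s0 t0 by (intro mult_right_mono) auto
        finally show ?thesis using n1 True t0 unfolding m_def by simp
      next
        case False
        then show ?thesis using n2 t0 unfolding m_def K_def by simp
      qed
    qed
    also have "\<dots> = K * (LINT s:A|\<mu>. m s)" by simp
    finally show ?thesis .
  qed
  have part1: "c * rate_fun a b \<mu> t \<le> Re (bernstein_fun a b \<mu> z)"
  proof -
    have "c * (a / 2) \<le> 1 * (a / 2)" by (rule mult_right_mono) (use c1 a0 in auto)
    then have "c * (a / 2) \<le> a" using a0 by simp
    moreover have "c * (b / t) \<le> b * w"
    proof -
      have "c * (b / t) = b * w * exp (- (t * w))" unfolding c_def using t0 by simp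
      also have "\<dots> \<le> (b * w) * 1" using b0 w0 t0 by (intro mult_left_mono) auto
      finally show ?thesis by simp
    qed
    ultimately show ?thesis unfolding r_eq g_eq using lowI ReI
      by (simp add: w_def distrib_left)
  qed
  have part3: "cmod (bernstein_fun a b \<mu> z) \<le> K * rate_fun a b \<mu> t"
  proof -
    have "cmod (bernstein_fun a b \<mu> z) \<le> cmod (complex_of_real a + complex_of_real b * z) + cmod (LINT s:A|\<mu>. F s)"
      unfolding g_eq by (rule norm_triangle_ineq)
    also have "cmod (complex_of_real a + complex_of_real b * z) \<le> cmod (complex_of_real a) + cmod (complex_of_real b * z)"
      by (rule norm_triangle_ineq)
    also have "cmod (complex_of_real a) + cmod (complex_of_real b * z) = a + b * cmod z"
      using a0 b0 by (simp add: norm_mult)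
    finally have "cmod (bernstein_fun a b \<mu> z) \<le> a + b * cmod z + cmod (LINT s:A|\<mu>. F s)" by simp
    moreover have "a \<le> K * (a / 2)"
    proof -
      have "2 * (a / 2) \<le> K * (a / 2)" unfolding K_def using a0 by (intro mult_right_mono) auto
      then show ?thesis by simp
    qed
    moreover have "b * cmod z \<le> K * (b / t)"
    proof -
      have "b * cmod z = (t * cmod z) * (b / t)" using t0 by simp
      also have "\<dots> \<le> K * (b / t)" unfolding K_def using b0 t0 by (intro mult_right_mono) auto
      finally show ?thesis .
    qed
    ultimately show ?thesis unfolding r_eq using upI by (simp add: distrib_left)
  qed
  show ?thesis using part1 part3 complex_Re_le_cmod unfolding c_def K_def w_def by simp
qed

end
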